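(* Let $\lambda$ be a cardinal, let $\langle P,\le\rangle$ and $\langle Q,\le\rangle$ be partially ordered sets and let $\varphi:P\to Q$ be a monotonic function. If $Q$ is $\lambda$-Noetherian and for every $q\in Q$ the fiber $\varphi^{-1}(\{q\})$ (with the induced order) is $\lambda$-Noetherian, then $P$ is $\lambda$-Noetherian.
   Context: A poset is Noetherian if it contains no infinite strictly increasing sequence. For a cardinal $\lambda$, a poset $\langle P,\le\rangle$ is $\lambda$-Noetherian if there is a function $f:P\to\lambda$ such that for every $\xi\in\lambda$ the subposet $f^{-1}(\{\xi\})$ with the restricted order is Noetherian. *)

theory Defs
  imports Main "HOL-Library.FuncSet"
begin

definition noetherian :: "'a set \<Rightarrow> 'a rel \<Rightarrow> bool" where
  "noetherian A r \<longleftrightarrow>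
     \<not> (\<exists>s :: nat \<Rightarrow> 'a. (\<forall>n. s n \<in> A) \<and>
                        (\<forall>n. (s n, s (Suc n)) \<in> r \<and> s n \<noteq> s (Suc n)))"

text \<open>The cardinal lambda is represented by a set L of cardinality lambda
  (e.g. the set of ordinals below lambda); the notion only depends on |L|.\<close>

definition lambda_noetherian :: "'c set \<Rightarrow> 'a set \<Rightarrow> 'a rel \<Rightarrow> bool" where
  "lambda_noetherian L A r \<longleftrightarrow>
     (\<exists>f. f \<in> A \<rightarrow> L \<and> (\<forall>\<xi>\<in>L. noetherian {x \<in> A. f x = \<xi>} r))"

end

theory Submission
  imports Defs "HOL-Library.Infinite_Set"
begin

lemma chain_le:
  assumes tr: "trans r" and rf: "\<forall>x\<in>A. (x,x) \<in> r"
    and tA: "\<forall>n. t n \<in> A" and st: "\<forall>n. (t n, t (Suc n)) \<in> r"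
  shows "m \<le> n \<Longrightarrow> (t m, t n) \<in> r"
proof (induction n)
  case 0 then show ?case using rf tA by simp
next
  case (Suc n)
  show ?case
  proof (cases "m = Suc n")
    case True then show ?thesis using rf tA by simp
  next
    case False
    then have "(t m, t n) \<in> r" using Suc by simp
    then show ?thesis using st tr by (meson transD)
  qed
qed

lemma subseq_strict:
  assumes tr: "trans r" and an: "antisym r" and rf: "\<forall>x\<in>A. (x,x) \<in> r"
    and tA: "\<forall>n. t n \<in> A" and st: "\<forall>n. (t n, t (Suc n)) \<in> r"
    and ne: "t m \<noteq> t (Suc m)" and mn: "m < n"
  shows "(t m, t n) \<in> r \<and> t m \<noteq> t n"
proof -
  have 1: "(t m, t n) \<in> r" using chain_le[OF tr rf tA st] mn by simp
  have 2: "(t (Suc m), t n) \<in> r" using chain_le[OF tr rf tA st] mn by simp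
  have "t m \<noteq> t n"
  proof
    assume e: "t m = t n"
    have "(t m, t (Suc m)) \<in> r" using st by simp
    moreover have "(t (Suc m), t m) \<in> r" using 2 e by simp
    ultimately have "t m = t (Suc m)" using an by (meson antisymD)
    with ne show False by simp
  qed
  with 1 show ?thesis by simp
qed

lemma ev_const:
  assumes no: "noetherian A r" and tr: "trans r" and an: "antisym r"
    and rf: "\<forall>x\<in>A. (x,x) \<in> r"
    and tA: "\<forall>n. t n \<in> A" and st: "\<forall>n. (t n, t (Suc n)) \<in> r"
  shows "\<exists>N. \<forall>n\<ge>N. t n = t N"
proof (rule ccontr)
  assume nc: "\<not> ?thesis"
  define S where "S = {n. t n \<noteq> t (Suc n)}"
  have inf: "infinite S"
  proof
    assume fin: "finite S"
    then obtain N where N: "\<forall>n\<in>S. n < N"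
      by (metis finite_nat_set_iff_bounded)
    have "\<forall>n\<ge>N. t n = t N"
    proof (intro allI impI)
      fix n assume "N \<le> n"
      then show "t n = t N"
      proof (induction n rule: dec_induct)
        case base then show ?case by simp
      next
        case (step n)
        then have "n \<notin> S" using N by auto
        then show ?case using step unfolding S_def by simp
      qed
    qed
    with nc show False by blast
  qed
  define u where "u k = t (enumerate S k)" for k
  have "\<forall>k. u k \<in> A" using tA u_def by simp
  moreover have "\<forall>k. (u k, u (Suc k)) \<in> r \<and> u k \<noteq> u (Suc k)"
  proof
    fix k
    have "enumerate S k \<in> S" using enumerate_in_set[OF inf] .
    then have "t (enumerate S k) \<noteq> t (Suc (enumerate S k))" unfolding S_def by simp
    moreover have "enumerate S k < enumerate S (Suc k)" using enumerate_step[OF inf] .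
    ultimately show "(u k, u (Suc k)) \<in> r \<and> u k \<noteq> u (Suc k)"
      unfolding u_def using subseq_strict[OF tr an rf tA st] by blast
  qed
  ultimately show False using no unfolding noetherian_def by blast
qed

lemma fin_colors:
  assumes fin: "finite L" and f: "f \<in> A \<rightarrow> L"
    and fib: "\<forall>\<xi>\<in>L. noetherian {x \<in> A. f x = \<xi>} r"
    and tr: "trans r" and an: "antisym r" and rf: "\<forall>x\<in>A. (x,x) \<in> r"
  shows "noetherian A r"
  unfolding noetherian_def
proof
  assume "\<exists>s. (\<forall>n. s n \<in> A) \<and> (\<forall>n. (s n, s (Suc n)) \<in> r \<and> s n \<noteq> s (Suc n))"
  then obtain s where sA: "\<forall>n. s n \<in> A" and ss: "\<forall>n. (s n, s (Suc n)) \<in> r \<and> s n \<noteq> s (Suc n)"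
    by blast
  have "finite ((\<lambda>n. f (s n)) ` UNIV)"
    using fin f sA by (meson Pi_mem finite_subset image_subsetI)
  then obtain \<xi> where \<xi>: "\<xi> \<in> range (\<lambda>n. f (s n))" and inf: "infinite ((\<lambda>n. f (s n)) -` {\<xi>})"
    using inf_img_fin_dom[of "\<lambda>n. f (s n)" UNIV] by auto
  define S where "S = (\<lambda>n. f (s n)) -` {\<xi>}"
  have \<xi>L: "\<xi> \<in> L" using \<xi> f sA by auto
  define u where "u k = s (enumerate S k)" for k
  have st: "\<forall>n. (s n, s (Suc n)) \<in> r" using ss by simp
  have "\<forall>k. u k \<in> {x \<in> A. f x = \<xi>}"
    using enumerate_in_set[of S] inf sA unfolding u_def S_def by auto
  moreover have "\<forall>k. (u k, u (Suc k)) \<in> r \<and> u k \<noteq> u (Suc k)"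
  proof
    fix k
    have "enumerate S k < enumerate S (Suc k)" using enumerate_step inf S_def by blast
    then show "(u k, u (Suc k)) \<in> r \<and> u k \<noteq> u (Suc k)"
      unfolding u_def using subseq_strict[OF tr an rf sA st] ss by blast
  qed
  ultimately show False using fib \<xi>L unfolding noetherian_def by blast
qed

lemma core:
  assumes poP: "partial_order_on P rP" and poQ: "partial_order_on Q rQ"
    and phi: "\<phi> \<in> P \<rightarrow> Q"
    and mono: "\<forall>x\<in>P. \<forall>y\<in>P. (x, y) \<in> rP \<longrightarrow> (\<phi> x, \<phi> y) \<in> rQ"
    and g: "\<forall>\<xi>\<in>L. noetherian {x \<in> Q. g x = \<xi>} rQ"
    and h: "\<forall>q\<in>Q. \<forall>\<xi>\<in>L. noetherian {x \<in> {x \<in> P. \<phi> x = q}. h q x = \<xi>} rP"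
    and a: "a \<in> L" and b: "b \<in> L"
  shows "noetherian {x \<in> P. g (\<phi> x) = a \<and> h (\<phi> x) x = b} rP"
  unfolding noetherian_def
proof
  assume "\<exists>s. (\<forall>n. s n \<in> {x \<in> P. g (\<phi> x) = a \<and> h (\<phi> x) x = b}) \<and>
      (\<forall>n. (s n, s (Suc n)) \<in> rP \<and> s n \<noteq> s (Suc n))"
  then obtain s where sA: "\<forall>n. s n \<in> {x \<in> P. g (\<phi> x) = a \<and> h (\<phi> x) x = b}"
    and ss: "\<forall>n. (s n, s (Suc n)) \<in> rP \<and> s n \<noteq> s (Suc n)" by blast
  have trQ: "trans rQ" using partial_order_onD(2)[OF poQ] .
  have anQ: "antisym rQ" using partial_order_onD(3)[OF poQ] .
  have rfQ: "\<forall>x\<in>Q. (x,x) \<in> rQ" using partial_order_onD(1)[OF poQ] unfolding refl_on_def .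
  define t where "t n = \<phi> (s n)" for n
  have tA: "\<forall>n. t n \<in> {x \<in> Q. g x = a}" using sA phi unfolding t_def by auto
  have rfQ': "\<forall>x\<in>{x \<in> Q. g x = a}. (x,x) \<in> rQ" using rfQ by auto
  have tst: "\<forall>n. (t n, t (Suc n)) \<in> rQ"
  proof
    fix n
    have "s n \<in> P" "s (Suc n) \<in> P" "(s n, s (Suc n)) \<in> rP" using sA ss by auto
    then show "(t n, t (Suc n)) \<in> rQ" using mono unfolding t_def by blast
  qed
  have ga: "noetherian {x \<in> Q. g x = a} rQ" using g a by blast
  obtain N where N: "\<forall>n\<ge>N. t n = t N"
    using ev_const[OF ga trQ anQ rfQ' tA tst] by blast
  define q where "q = t N"
  have qQ: "q \<in> Q" using tA q_def by auto
  define v where "v k = s (N + k)" for k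
  have "\<forall>k. v k \<in> {x \<in> {x \<in> P. \<phi> x = q}. h q x = b}"
  proof
    fix k
    have "t (N + k) = t N" using N[rule_format, of "N + k"] by (simp only: le_add1 simp_thms)
    then have e: "\<phi> (v k) = q" unfolding v_def q_def t_def .
    have "v k \<in> P" "h (\<phi> (v k)) (v k) = b" using sA unfolding v_def by auto
    with e show "v k \<in> {x \<in> {x \<in> P. \<phi> x = q}. h q x = b}" by simp
  qed
  moreover have "\<forall>k. (v k, v (Suc k)) \<in> rP \<and> v k \<noteq> v (Suc k)"
    using ss unfolding v_def by simp
  moreover have "noetherian {x \<in> {x \<in> P. \<phi> x = q}. h q x = b} rP" using h qQ b by blast
  ultimately show False unfolding noetherian_def by blast
qed

theorem lemma1:
  fixes L :: "'c set" and P :: "'a set" and rP :: "'a rel"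
    and Q :: "'b set" and rQ :: "'b rel" and \<phi> :: "'a \<Rightarrow> 'b"
  assumes "partial_order_on P rP" and "partial_order_on Q rQ"
    and "\<phi> \<in> P \<rightarrow> Q"
    and "\<forall>x\<in>P. \<forall>y\<in>P. (x, y) \<in> rP \<longrightarrow> (\<phi> x, \<phi> y) \<in> rQ"
    and "lambda_noetherian L Q rQ"
    and "\<forall>q\<in>Q. lambda_noetherian L {x \<in> P. \<phi> x = q} rP"
  shows "lambda_noetherian L P rP"
proof -
  obtain g where gL: "g \<in> Q \<rightarrow> L" and g: "\<forall>\<xi>\<in>L. noetherian {x \<in> Q. g x = \<xi>} rQ"
    using assms(5) unfolding lambda_noetherian_def by blast
  have "\<forall>q\<in>Q. \<exists>hq. hq \<in> {x \<in> P. \<phi> x = q} \<rightarrow> L \<and>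
          (\<forall>\<xi>\<in>L. noetherian {x \<in> {x \<in> P. \<phi> x = q}. hq x = \<xi>} rP)"
    using assms(6) unfolding lambda_noetherian_def by blast
  from bchoice[OF this] obtain h where hh: "\<forall>q\<in>Q. h q \<in> {x \<in> P. \<phi> x = q} \<rightarrow> L \<and>
          (\<forall>\<xi>\<in>L. noetherian {x \<in> {x \<in> P. \<phi> x = q}. h q x = \<xi>} rP)" by blast
  then have hL: "\<forall>q\<in>Q. h q \<in> {x \<in> P. \<phi> x = q} \<rightarrow> L"
    and h: "\<forall>q\<in>Q. \<forall>\<xi>\<in>L. noetherian {x \<in> {x \<in> P. \<phi> x = q}. h q x = \<xi>} rP"
    by blast+
  have trP: "trans rP" using partial_order_onD(2)[OF assms(1)] .
  have anP: "antisym rP" using partial_order_onD(3)[OF assms(1)] .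
  have rfP: "\<forall>x\<in>P. (x,x) \<in> rP" using partial_order_onD(1)[OF assms(1)] unfolding refl_on_def .
  define c where "c x = (g (\<phi> x), h (\<phi> x) x)" for x
  have cL: "c \<in> P \<rightarrow> L \<times> L"
    using gL hL assms(3) unfolding c_def by auto
  have cf: "\<forall>p\<in>L \<times> L. noetherian {x \<in> P. c x = p} rP"
  proof
    fix p assume "p \<in> L \<times> L"
    then obtain a b where p: "p = (a,b)" "a \<in> L" "b \<in> L" by blast
    show "noetherian {x \<in> P. c x = p} rP"
      using core[OF assms(1-4) g h p(2,3)] unfolding c_def p(1) by simp
  qed
  show ?thesis
  proof (cases "finite L")
    case True
    have nP: "noetherian P rP"
      using fin_colors[OF _ cL cf trP anP rfP] True by blast
    show ?thesis
    proof (cases "L = {}")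
      case True
      then have "Q = {}" using gL by auto
      then have "P = {}" using assms(3) by auto
      then show ?thesis unfolding lambda_noetherian_def noetherian_def by auto
    next
      case False
      then obtain \<xi>0 where "\<xi>0 \<in> L" by blast
      then show ?thesis unfolding lambda_noetherian_def
        using nP by (intro exI[of _ "\<lambda>_. \<xi>0"]) (auto simp: noetherian_def)
    qed
  next
    case False
    have "\<exists>k. bij_betw k (L \<times> L) L"
      by (rule card_of_ordIso[THEN iffD2, OF card_of_Times_same_infinite[OF False]])
    then obtain k where k: "bij_betw k (L \<times> L) L" ..
    have inj: "inj_on k (L \<times> L)" by (rule bij_betw_imp_inj_on[OF k])
    have surj: "k ` (L \<times> L) = L" by (rule bij_betw_imp_surj_on[OF k])
    have kc: "(\<lambda>x. k (c x)) \<in> P \<rightarrow> L"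
    proof
      fix x assume "x \<in> P"
      then have "c x \<in> L \<times> L" using cL by (rule funcset_mem[rotated])
      then show "k (c x) \<in> L" by (rule bspec[OF bij_betwE[OF k]])
    qed
    have kf: "\<forall>\<xi>\<in>L. noetherian {x \<in> P. k (c x) = \<xi>} rP"
    proof
      fix \<xi> assume "\<xi> \<in> L"
      then have "\<xi> \<in> k ` (L \<times> L)" unfolding surj .
      then obtain p where p: "p \<in> L \<times> L" "\<xi> = k p" by (rule imageE)
      have eq: "\<forall>x\<in>P. (k (c x) = \<xi>) = (c x = p)"
      proof
        fix x assume "x \<in> P"
        then have "c x \<in> L \<times> L" using cL by (rule funcset_mem[rotated])
        then have "(k (c x) = k p) = (c x = p)" by (rule inj_on_eq_iff[OF inj _ p(1)])
        then show "(k (c x) = \<xi>) = (c x = p)" unfolding p(2) .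
      qed
      then have seq: "{x \<in> P. k (c x) = \<xi>} = {x \<in> P. c x = p}" by blast
      have "noetherian {x \<in> P. c x = p} rP" by (rule bspec[OF cf p(1)])
      then show "noetherian {x \<in> P. k (c x) = \<xi>} rP" unfolding seq .
    qed
    show ?thesis unfolding lambda_noetherian_def using kc kf by blast
  qed
qed

end
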